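(* For every integer $N\ge 2$, $\displaystyle\sum_{n=2}^N\frac{1}{n}<\frac{\ln N}{(N+1)\ln\!\big(\frac{N+1}{N}\big)}$. *)

theory Defs
  imports Complex_Main
begin

end

theory Submission
  imports Defs
begin

lemma mono_aux:
  fixes f f' :: "real \<Rightarrow> real"
  assumes "0 \<le> x" and der: "\<And>t. 0 \<le> t \<Longrightarrow> (f has_real_derivative f' t) (at t)"
    and pos: "\<And>t. 0 \<le> t \<Longrightarrow> f' t \<ge> 0"
  shows "f 0 \<le> f x"
proof (rule DERIV_nonneg_imp_increasing_open[OF assms(1)])
  show "\<And>t. 0 < t \<Longrightarrow> t < x \<Longrightarrow> \<exists>y. DERIV f t :> y \<and> y \<ge> 0"
    using der pos by (meson less_imp_le)
  show "continuous_on {0..x} f"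
    by (rule DERIV_atLeastAtMost_imp_continuous_on) (use der in blast)
qed

lemma ln_lower: fixes y :: real assumes "0 \<le> y" shows "2*y/(2+y) \<le> ln (1+y)"
proof -
  let ?f = "\<lambda>t::real. ln (1+t) - 2*t/(2+t)"
  let ?f' = "\<lambda>t::real. t^2/((1+t)*(2+t)^2)"
  have "?f 0 \<le> ?f y"
  proof (rule mono_aux[OF assms, where f'="?f'"])
    fix t :: real assume t: "0 \<le> t"
    have "(?f has_real_derivative (1/(1+t) - (2*(2+t) - 2*t*1)/(2+t)^2)) (at t)"
      using t by (auto intro!: derivative_eq_intros simp: power2_eq_square)
    moreover have "1/(1+t) - (2*(2+t) - 2*t*1)/(2+t)^2 = ?f' t" using t
      by (simp add: divide_simps power2_eq_square) (simp add: algebra_simps)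
    ultimately show "(?f has_real_derivative ?f' t) (at t)" by simp
    show "?f' t \<ge> 0" using t by simp
  qed
  then show ?thesis by simp
qed

lemma ln_upper: fixes y :: real assumes "0 \<le> y" shows "ln (1+y) \<le> y*(2+y)/(2*(1+y))"
proof -
  let ?f = "\<lambda>t::real. t*(2+t)/(2*(1+t)) - ln (1+t)"
  let ?f' = "\<lambda>t::real. t^2/(2*(1+t)^2)"
  have "?f 0 \<le> ?f y"
  proof (rule mono_aux[OF assms, where f'="?f'"])
    fix t :: real assume t: "0 \<le> t"
    have "(?f has_real_derivative (((1*(2+t) + t*1)*(2*(1+t)) - t*(2+t)*2)/(2*(1+t))^2 - 1/(1+t))) (at t)"
      using t by (auto intro!: derivative_eq_intros simp: power2_eq_square)
    moreover have "((1*(2+t) + t*1)*(2*(1+t)) - t*(2+t)*2)/(2*(1+t))^2 - 1/(1+t) = ?f' t" using t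
      by (simp add: divide_simps power2_eq_square) (simp add: algebra_simps)
    ultimately show "(?f has_real_derivative ?f' t) (at t)" by simp
    show "?f' t \<ge> 0" using t by simp
  qed
  then show ?thesis by simp
qed

lemma harm_bound: "n \<ge> 1 \<Longrightarrow> (\<Sum>k=2..n. 1 / real k) \<le> ln ((2 * real n + 1) / 3)"
proof (induction n rule: dec_induct)
  case base
  then show ?case by simp
next
  case (step n)
  have n: "real n \<ge> 1" using step by simp
  define y where "y = 2 / (2 * real n + 1)"
  have y0: "0 \<le> y" using n by (simp add: y_def)
  have e1: "2*y/(2+y) = 1 / real (Suc n)" using n unfolding y_def
    by (simp add: divide_simps) (simp add: algebra_simps)
  have e2: "1 + y = (2 * real (Suc n) + 1) / (2 * real n + 1)" using n unfolding y_def
    by (simp add: divide_simps)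
  have "(\<Sum>k=2..Suc n. 1 / real k) = (\<Sum>k=2..n. 1 / real k) + 1 / real (Suc n)"
    using step by (simp add: sum.atLeast_Suc_atMost_Suc_shift)
  also have "\<dots> \<le> ln ((2 * real n + 1) / 3) + ln (1 + y)"
    using step.IH ln_lower[OF y0] e1 by simp
  also have "\<dots> = ln ((2 * real n + 1) / 3 * (1 + y))"
    using n y0 ln_mult[of "(2 * real n + 1) / 3" "1 + y"] by simp
  also have "(2 * real n + 1) / 3 * (1 + y) = (2 * real (Suc n) + 1) / 3"
    using n unfolding e2 by (simp add: divide_simps)
  finally show ?case .
qed

theorem lemma1:
  fixes N :: nat
  assumes "N \<ge> 2"
  shows "(\<Sum>n=2..N. 1 / real n) < ln (real N) / ((real N + 1) * ln ((real N + 1) / real N))"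
proof -
  define S where "S = (\<Sum>n=2..N. 1 / real n)"
  define L where "L = ln ((2 * real N + 1) / 3)"
  define D where "D = (real N + 1) * ln ((real N + 1) / real N)"
  have N: "real N \<ge> 2" using assms by simp
  have SL: "S \<le> L" unfolding S_def L_def using harm_bound assms by simp
  have S0: "S \<ge> 0" unfolding S_def by (simp add: sum_nonneg)
  have q: "(real N + 1) / real N = 1 + 1 / real N" using N by (simp add: field_simps)
  have lnq: "ln ((real N + 1) / real N) \<le> (1/real N) * (2 + 1/real N) / (2 * (1 + 1/real N))"
    unfolding q by (rule ln_upper) simp
  have "(1/real N) * (2 + 1/real N) / (2 * (1 + 1/real N)) = (2 * real N + 1) / (2 * real N * (real N + 1))"
    using N by (simp add: divide_simps)
  with lnq have "D \<le> (real N + 1) * ((2 * real N + 1) / (2 * real N * (real N + 1)))"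
    unfolding D_def by (intro mult_left_mono) auto
  also have "\<dots> = (2 * real N + 1) / (2 * real N)" using N by simp
  finally have DU: "D \<le> (2 * real N + 1) / (2 * real N)" .
  have D0: "D > 0" unfolding D_def using N by (intro mult_pos_pos) auto
  have ln2: "ln (2::real) \<le> 3/4" using ln_upper[of 1] by simp
  have a: "ln ((2 * real N + 1) / (3 * real N)) \<le> -1/6"
  proof -
    have "ln ((2 * real N + 1) / (3 * real N)) \<le> (2 * real N + 1) / (3 * real N) - 1"
      using N by (intro ln_le_minus_one) auto
    also have "\<dots> \<le> -1/6" using N by (simp add: divide_simps)
    finally show ?thesis .
  qed
  have "(2 * real N + 1) / 3 = real N * ((2 * real N + 1) / (3 * real N))" using N by simp
  moreover have "ln (real N * ((2 * real N + 1) / (3 * real N))) = ln (real N) + ln ((2 * real N + 1) / (3 * real N))"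
    using N by (intro ln_mult_pos) auto
  ultimately have "L = ln (real N) + ln ((2 * real N + 1) / (3 * real N))" unfolding L_def
    by metis
  with a have L1: "L \<le> ln (real N) - 1/6" by simp
  have "(2 * real N + 1) / 3 = 2 * ((2 * real N + 1) / 6)" by simp
  moreover have "ln (2 * ((2 * real N + 1) / 6)) = ln 2 + ln ((2 * real N + 1) / 6)"
    using N by (intro ln_mult_pos) auto
  ultimately have "L = ln 2 + ln ((2 * real N + 1) / 6)" unfolding L_def by metis
  moreover have "ln ((2 * real N + 1) / 6) \<le> (2 * real N + 1) / 6 - 1"
    using N by (intro ln_le_minus_one) auto
  ultimately have L2: "L < real N / 3" using ln2 by (simp add: field_simps)
  have L0: "L \<ge> 0" using SL S0 by simp
  have "S * D \<le> L * ((2 * real N + 1) / (2 * real N))"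
    using SL S0 DU D0 by (intro mult_mono) auto
  also have "\<dots> < ln (real N)"
  proof -
    have "L * (2 * real N + 1) < 2 * real N * ln (real N)"
    proof -
      have "real N * (L + 1/6) \<le> real N * ln (real N)" using L1 N by (intro mult_left_mono) auto
      thus ?thesis using L2 by (simp add: algebra_simps)
    qed
    thus ?thesis using N by (simp add: divide_simps mult.commute)
  qed
  finally have "S * D < ln (real N)" .
  thus ?thesis unfolding S_def[symmetric] D_def[symmetric] using D0 by (simp add: pos_less_divide_eq)
qed

end
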